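(* Let $n\in\mathbb{N}$, let $c=(c_{i,j})$ be an $n\times(n+1)$ matrix with entries in $\{0,1\}$ such that every row and every column contains at least one entry equal to $1$, let $\sigma_1,\ldots,\sigma_n>0$, $\gamma_1,\ldots,\gamma_{n+1}>0$, $\gamma^\ast=\gamma_1+\cdots+\gamma_{n+1}$. Let $\mathbf{X}=(X_1,\ldots,X_n)'$ have decumulative distribution function $\mathbf{P}[X_1>x_1,\ldots,X_n>x_n]=\prod_{j=1}^{n+1}(1+\sum_{i=1}^nc_{i,j}x_i/\sigma_i)^{-\gamma_j}$ for $(x_1,\ldots,x_n)'\in(0,\infty)^n$, and $X_-=\min_iX_i$. Put $\alpha_j=(\sum_{i=1}^nc_{i,j}/\sigma_i)^{-1}$, $\alpha_+(\boldsymbol{\sigma})=\max_j\alpha_j$, and let $p_k=c_+\delta_k$, $k=0,1,\ldots$, where $c_+=\prod_{j=1}^{n+1}(\alpha_j/\alpha_+(\boldsymbol{\sigma}))^{\gamma_j}$, $\delta_0=1$, $\delta_k=k^{-1}\sum_{l=1}^k\sum_{j=1}^{n+1}\gamma_j(1-\alpha_j/\alpha_+(\boldsymbol{\sigma}))^l\delta_{k-l}$. Let $Q$ be a nonnegative integer-valued random variable with \[ q_k=\mathbf{P}[Q=k]=\frac{1}{\mathbf{E}[X_-]}\frac{\alpha_+(\boldsymbol{\sigma})}{\gamma^\ast+k-1}p_k,\quad k=0,1,\ldots, \] and let $X_-^\ast$ have decumulative distribution function $\overline{F}_{X_-^\ast}(x)=\sum_{k=0}^\infty q_k(1+x/\alpha_+(\boldsymbol{\sigma}))^{-(\gamma^\ast+k-1)}$,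 i.e. $X_-^\ast\sim Pa(II)(\alpha_+(\boldsymbol{\sigma}),\gamma^\ast+Q-1)$. Then for $q\in[0,1)$, whenever $CTE_q[X_-]$ is finite, \[ CTE_q[X_-]=\mathbf{E}[X_-]\frac{\overline{F}_{X_-^\ast}(VaR_q[X_-])}{1-q}+VaR_q[X_-]. \]
   Context: $VaR_q[Y]=\inf\{x:\mathbf{P}[Y\le x]\ge q\}$ and $CTE_q[Y]=\mathbf{E}[Y\mid Y>VaR_q[Y]]$. $Pa(II)(\sigma,\alpha)$ has decumulative distribution function $(1+x/\sigma)^{-\alpha}$, $x>0$, and a random tail index denotes the corresponding mixture. *)

theory Defs
  imports "HOL-Probability.Probability"
begin

text \<open>The infimum is taken over
  the nonnegative half-line (the support of a positive loss); for q > 0 and a loss with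
  P[Y \<le> 0] = 0 this coincides with inf{x. P[Y \<le> x] \<ge> q}, and for q = 0 it gives
  the left endpoint 0 of the support instead of -infinity.\<close>
definition VaR :: "'a measure \<Rightarrow> ('a \<Rightarrow> real) \<Rightarrow> real \<Rightarrow> real" where
  "VaR M Y q = Inf {x. 0 \<le> x \<and> q \<le> measure M {\<omega> \<in> space M. Y \<omega> \<le> x}}"

definition CTE :: "'a measure \<Rightarrow> ('a \<Rightarrow> real) \<Rightarrow> real \<Rightarrow> real" where
  "CTE M Y q = (LINT \<omega>:{\<omega> \<in> space M. VaR M Y q < Y \<omega>}|M. Y \<omega>)
       / measure M {\<omega> \<in> space M. VaR M Y q < Y \<omega>}"

text \<open>alpha_j = (sum_i c_{i,j}/sigma_i)^{-1}; rows indexed i < n, columns j \<le> n.\<close>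
definition alpha_col :: "nat \<Rightarrow> (nat \<Rightarrow> nat \<Rightarrow> real) \<Rightarrow> (nat \<Rightarrow> real) \<Rightarrow> nat \<Rightarrow> real" where
  "alpha_col n c \<sigma> j = inverse (\<Sum>i<n. c i j / \<sigma> i)"

definition alpha_plus :: "nat \<Rightarrow> (nat \<Rightarrow> nat \<Rightarrow> real) \<Rightarrow> (nat \<Rightarrow> real) \<Rightarrow> real" where
  "alpha_plus n c \<sigma> = Max (alpha_col n c \<sigma> ` {..n})"

text \<open>delta_0 = 1, delta_k = k^{-1} sum_{l=1}^k sum_{j\<le>n} gamma_j (1 - r_j)^l delta_{k-l},
  with r_j = alpha_j / alpha_plus (here the summation index l is shifted by one).\<close>
fun delta_seq :: "nat \<Rightarrow> (nat \<Rightarrow> real) \<Rightarrow> (nat \<Rightarrow> real) \<Rightarrow> nat \<Rightarrow> real" where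
  "delta_seq n r \<gamma> 0 = 1"
| "delta_seq n r \<gamma> (Suc k) =
     (\<Sum>l<Suc k. \<Sum>j\<le>n. \<gamma> j * (1 - r j) ^ (Suc l) * delta_seq n r \<gamma> (k - l)) / real (Suc k)"

definition c_plus :: "nat \<Rightarrow> (nat \<Rightarrow> nat \<Rightarrow> real) \<Rightarrow> (nat \<Rightarrow> real) \<Rightarrow> (nat \<Rightarrow> real) \<Rightarrow> real" where
  "c_plus n c \<sigma> \<gamma> = (\<Prod>j\<le>n. (alpha_col n c \<sigma> j / alpha_plus n c \<sigma>) powr (\<gamma> j))"

definition p_seq :: "nat \<Rightarrow> (nat \<Rightarrow> nat \<Rightarrow> real) \<Rightarrow> (nat \<Rightarrow> real) \<Rightarrow> (nat \<Rightarrow> real) \<Rightarrow> nat \<Rightarrow> real" where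
  "p_seq n c \<sigma> \<gamma> k = c_plus n c \<sigma> \<gamma> *
     delta_seq n (\<lambda>j. alpha_col n c \<sigma> j / alpha_plus n c \<sigma>) \<gamma> k"

end

theory Submission
  imports Defs
begin


lemma delta_nonneg:
  assumes "\<forall>j\<le>n. 0 \<le> 1 - r j" "\<forall>j\<le>n. 0 < \<gamma> j"
  shows "0 \<le> delta_seq n r \<gamma> k"
proof (induction k rule: less_induct)
  case (less k)
  show ?case
  proof (cases k)
    case 0 then show ?thesis by simp
  next
    case (Suc m)
    have *: "\<And>l j. l < Suc m \<Longrightarrow> j \<le> n \<Longrightarrow> 0 \<le> \<gamma> j * (1 - r j) ^ Suc l * delta_seq n r \<gamma> (m - l)"
      using less[of "m - _"] assms Suc by (intro mult_nonneg_nonneg) (auto intro: less_imp_le)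
    show ?thesis unfolding Suc delta_seq.simps
      by (rule divide_nonneg_nonneg, rule sum_nonneg, rule sum_nonneg) (use * in auto)
  qed
qed

lemma geom_bound:
  fixes x :: real assumes "0 \<le> x" "x < 1"
  shows "(\<Sum>l<N. x ^ Suc l) \<le> x / (1 - x)"
proof -
  have "(\<Sum>l<N. x ^ Suc l) = x * (\<Sum>l<N. x ^ l)" by (simp add: sum_distrib_left)
  also have "\<dots> = x * ((1 - x ^ N) / (1 - x))" using assms by (subst sum_gp_strict) auto
  also have "\<dots> \<le> x * (1 / (1 - x))" using assms
    by (intro mult_left_mono divide_right_mono) auto
  finally show ?thesis by simp
qed

lemma delta_bound:
  assumes b: "\<forall>j\<le>n. 0 \<le> 1 - r j \<and> 1 - r j \<le> B" and B: "0 \<le> B" "B < \<rho>"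
    and \<gamma>: "\<forall>j\<le>n. 0 < \<gamma> j"
  shows "\<exists>K. \<forall>k. delta_seq n r \<gamma> k \<le> K * \<rho> ^ k"
proof -
  define d where "d = delta_seq n r \<gamma>"
  define \<Gamma> where "\<Gamma> = (\<Sum>j\<le>n. \<gamma> j)"
  have \<rho>: "0 < \<rho>" using B by linarith
  have \<Gamma>0: "0 \<le> \<Gamma>" unfolding \<Gamma>_def using \<gamma> by (auto intro: sum_nonneg less_imp_le)
  obtain k0 :: nat where k0: "\<Gamma> * B / (\<rho> - B) \<le> real k0" using real_arch_simple by blast
  define K where "K = Max ((\<lambda>k. d k / \<rho> ^ k) ` {..k0})"
  have K1: "d k \<le> K * \<rho> ^ k" if "k \<le> k0" for k
  proof -
    have "d k / \<rho> ^ k \<le> K" unfolding K_def using that by (intro Max_ge) auto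
    then show ?thesis using \<rho> by (simp add: divide_le_eq)
  qed
  have Kpos: "1 \<le> K" using K1[of 0] by (simp add: d_def)
  have "d k \<le> K * \<rho> ^ k" for k
  proof (induction k rule: less_induct)
    case (less k)
    show ?case
    proof (cases "k \<le> k0")
      case True then show ?thesis by (rule K1)
    next
      case False
      then obtain m where m: "k = Suc m" "k0 \<le> m" by (cases k) auto
      have "real (Suc m) * d (Suc m) = (\<Sum>l<Suc m. \<Sum>j\<le>n. \<gamma> j * (1 - r j) ^ Suc l * d (m - l))"
        unfolding d_def by simp
      also have "\<dots> \<le> (\<Sum>l<Suc m. \<Sum>j\<le>n. \<gamma> j * B ^ Suc l * (K * \<rho> ^ (m - l)))"
      proof (intro sum_mono)
        fix l j assume l: "l \<in> {..<Suc m}" and j: "j \<in> {..n}"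
        have "d (m - l) \<le> K * \<rho> ^ (m - l)" using less[of "m - l"] m by auto
        moreover have "(1 - r j) ^ Suc l \<le> B ^ Suc l" using b j by (intro power_mono) auto
        moreover have "0 \<le> d (m - l)" unfolding d_def using b \<gamma> by (intro delta_nonneg) auto
        moreover have "0 \<le> (1 - r j) ^ Suc l" using b j by auto
        moreover have "0 \<le> \<gamma> j" using \<gamma> j by (auto intro: less_imp_le)
        moreover have "0 \<le> K * \<rho> ^ (m - l)" using Kpos \<rho> by auto
        ultimately show "\<gamma> j * (1 - r j) ^ Suc l * d (m - l) \<le> \<gamma> j * B ^ Suc l * (K * \<rho> ^ (m - l))"
          by (intro mult_mono mult_left_mono) (auto intro: mult_nonneg_nonneg)
      qed
      also have "\<dots> = \<Gamma> * K * \<rho> ^ Suc m * (\<Sum>l<Suc m. (B / \<rho>) ^ Suc l)"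
      proof -
        have "B ^ Suc l * \<rho> ^ (m - l) = \<rho> ^ Suc m * (B / \<rho>) ^ Suc l" if "l < Suc m" for l
        proof -
          have "\<rho> ^ Suc m = \<rho> ^ (m - l) * \<rho> ^ Suc l" using that by (simp flip: power_add)
          then show ?thesis using \<rho> by (simp add: power_divide)
        qed
        then have "(\<Sum>l<Suc m. \<Sum>j\<le>n. \<gamma> j * B ^ Suc l * (K * \<rho> ^ (m - l)))
            = (\<Sum>l<Suc m. \<Sum>j\<le>n. \<gamma> j * (K * (\<rho> ^ Suc m * (B / \<rho>) ^ Suc l)))"
          by (intro sum.cong refl) (simp add: mult_ac)
        also have "\<dots> = (\<Sum>l<Suc m. \<Gamma> * (K * (\<rho> ^ Suc m * (B / \<rho>) ^ Suc l)))"
          unfolding \<Gamma>_def by (simp add: sum_distrib_right)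
        also have "\<dots> = \<Gamma> * K * \<rho> ^ Suc m * (\<Sum>l<Suc m. (B / \<rho>) ^ Suc l)"
          by (simp only: sum_distrib_left mult.assoc)
        finally show ?thesis .
      qed
      also have "\<dots> \<le> \<Gamma> * K * \<rho> ^ Suc m * ((B / \<rho>) / (1 - B / \<rho>))"
        using B \<rho> Kpos \<Gamma>0 by (intro mult_left_mono geom_bound) auto
      also have "(B / \<rho>) / (1 - B / \<rho>) = B / (\<rho> - B)" using \<rho> by (simp add: field_simps)
      also have "\<Gamma> * K * \<rho> ^ Suc m * (B / (\<rho> - B)) = K * \<rho> ^ Suc m * (\<Gamma> * B / (\<rho> - B))" by simp
      also have "\<dots> \<le> K * \<rho> ^ Suc m * real (Suc m)"
        using k0 m Kpos \<rho> by (intro mult_left_mono) auto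
      finally have "real (Suc m) * d (Suc m) \<le> real (Suc m) * (K * \<rho> ^ Suc m)" by (simp add: mult_ac)
      then show ?thesis using m by simp
    qed
  qed
  then show ?thesis unfolding d_def by blast
qed

lemma delta_series:
  assumes r: "\<forall>j\<le>n. 0 < r j \<and> r j \<le> 1" and \<gamma>: "\<forall>j\<le>n. 0 < \<gamma> j"
    and t: "0 \<le> t" "t \<le> 1"
  shows "(\<lambda>k. delta_seq n r \<gamma> k * t ^ k) sums exp (- (\<Sum>j\<le>n. \<gamma> j * ln (1 - (1 - r j) * t)))"
proof -
  define d where "d = delta_seq n r \<gamma>"
  define b where "b j = 1 - r j" for j
  define B where "B = Max (b ` {..n})"
  have bB: "0 \<le> b j \<and> b j \<le> B" if "j \<le> n" for j
    using r that unfolding B_def b_def by (auto intro!: Max_ge)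
  have B0: "0 \<le> B" using bB[of 0] by auto
  have B1: "B < 1" unfolding B_def using r by (subst Max_less_iff) (auto simp: b_def)
  define \<rho> where "\<rho> = (1 + B) / 2"
  have \<rho>: "B < \<rho>" "\<rho> < 1" "0 < \<rho>" using B0 B1 by (auto simp: \<rho>_def)
  obtain K where K: "\<And>k. d k \<le> K * \<rho> ^ k"
    using delta_bound[of n r B \<rho> \<gamma>] bB B0 \<rho> \<gamma> unfolding d_def b_def by auto
  have d0: "0 \<le> d k" for k unfolding d_def using r \<gamma> by (intro delta_nonneg) auto
  define R where "R = 1 / \<rho>"
  have R1: "1 < R" using \<rho> by (simp add: R_def)
  have babs: "\<bar>b j * x\<bar> < 1" if "j \<le> n" "\<bar>x\<bar> < R" for j x
  proof -
    have "\<bar>b j * x\<bar> \<le> B * \<bar>x\<bar>" using bB[OF that(1)] by (simp add: abs_mult mult_right_mono)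
    also have "\<dots> \<le> \<rho> * \<bar>x\<bar>" using \<rho> by (intro mult_right_mono) auto
    also have "\<dots> < \<rho> * R" using \<rho> that by (intro mult_strict_left_mono) auto
    also have "\<rho> * R = 1" using \<rho> by (simp add: R_def)
    finally show ?thesis .
  qed
  have summ: "summable (\<lambda>k. d k * x ^ k)" if "\<bar>x\<bar> < R" for x
  proof -
    have "\<rho> * \<bar>x\<bar> < 1"
    proof -
      have "\<rho> * \<bar>x\<bar> < \<rho> * R" using \<rho> that by (intro mult_strict_left_mono) auto
      then show ?thesis using \<rho> by (simp add: R_def)
    qed
    then have "summable (\<lambda>k. K * (\<rho> * \<bar>x\<bar>) ^ k)" using \<rho>
      by (intro summable_mult summable_geometric) auto
    moreover have "norm \<bar>d k * x ^ k\<bar> \<le> K * (\<rho> * \<bar>x\<bar>) ^ k" for k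
    proof -
      have "norm \<bar>d k * x ^ k\<bar> = d k * \<bar>x\<bar> ^ k" using d0[of k] by (simp add: abs_mult power_abs)
      also have "\<dots> \<le> K * \<rho> ^ k * \<bar>x\<bar> ^ k" using K[of k] by (intro mult_right_mono) auto
      finally show ?thesis by (simp add: power_mult_distrib mult_ac)
    qed
    ultimately have "summable (\<lambda>k. \<bar>d k * x ^ k\<bar>)" by (rule summable_comparison_test'[where N=0])
    then show ?thesis by (rule summable_rabs_cancel)
  qed
  define S where "S x = (\<Sum>k. d k * x ^ k)" for x
  define h where "h x = (\<Sum>j\<le>n. \<gamma> j * b j / (1 - b j * x))" for x
  define a where "a l = (\<Sum>j\<le>n. \<gamma> j * b j ^ Suc l)" for l
  have a0: "0 \<le> a l" for l unfolding a_def
  proof (rule sum_nonneg)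
    fix j assume j: "j \<in> {..n}"
    have "0 \<le> \<gamma> j" using \<gamma> j by (auto intro: less_imp_le)
    moreover have "0 \<le> b j ^ Suc l" using bB[of j] j by auto
    ultimately show "0 \<le> \<gamma> j * b j ^ Suc l" by (rule mult_nonneg_nonneg)
  qed
  have asums: "(\<lambda>l. a l * x ^ l) sums h x" if "\<bar>x\<bar> < R" for x
  proof -
    have "(\<lambda>l. \<gamma> j * b j * (b j * x) ^ l) sums (\<gamma> j * b j / (1 - b j * x))" if "j \<in> {..n}" for j
      using geometric_sums[of "b j * x"] babs[of j x] \<open>\<bar>x\<bar> < R\<close> that
      by (auto dest: sums_mult[where c="\<gamma> j * b j"])
    then have "(\<lambda>l. \<Sum>j\<le>n. \<gamma> j * b j * (b j * x) ^ l) sums h x"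
      unfolding h_def by (rule sums_sum)
    moreover have "(\<Sum>j\<le>n. \<gamma> j * b j * (b j * x) ^ l) = a l * x ^ l" for l
      unfolding a_def by (simp add: sum_distrib_left power_mult_distrib mult_ac)
    ultimately show ?thesis by simp
  qed
  have diffs_eq: "diffs d k = (\<Sum>l\<le>k. a l * d (k - l))" for k
  proof -
    have "diffs d k = real (Suc k) * d (Suc k)" by (simp add: diffs_def)
    also have "\<dots> = (\<Sum>l<Suc k. \<Sum>j\<le>n. \<gamma> j * (1 - r j) ^ Suc l * d (k - l))"
      unfolding d_def by simp
    also have "\<dots> = (\<Sum>l\<le>k. a l * d (k - l))"
      unfolding a_def b_def lessThan_Suc_atMost by (simp add: sum_distrib_right)
    finally show ?thesis .
  qed
  have Sderiv: "DERIV S x :> S x * h x" if "\<bar>x\<bar> < R" for x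
  proof -
    define K' where "K' = (\<bar>x\<bar> + R) / 2"
    have K': "\<bar>x\<bar> < K'" "\<bar>K'\<bar> < R" using that R1 by (auto simp: K'_def)
    have D: "DERIV S x :> (\<Sum>k. diffs d k * x ^ k)"
      unfolding S_def by (rule termdiffs_strong[OF summ[OF K'(2)]]) (use K' in auto)
    have na: "summable (\<lambda>l. norm (a l * x ^ l))"
    proof -
      have "summable (\<lambda>l. a l * \<bar>x\<bar> ^ l)" using asums[of "\<bar>x\<bar>"] that by (auto intro: sums_summable)
      then show ?thesis using a0 by (simp add: abs_mult power_abs)
    qed
    have nd: "summable (\<lambda>k. norm (d k * x ^ k))"
    proof -
      have "summable (\<lambda>k. d k * \<bar>x\<bar> ^ k)" using summ[of "\<bar>x\<bar>"] that by auto
      then show ?thesis using d0 by (simp add: abs_mult power_abs)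
    qed
    have "(\<Sum>l. a l * x ^ l) * (\<Sum>k. d k * x ^ k) = (\<Sum>k. \<Sum>l\<le>k. a l * x ^ l * (d (k - l) * x ^ (k - l)))"
      by (rule Cauchy_product[OF na nd])
    also have "\<dots> = (\<Sum>k. diffs d k * x ^ k)"
    proof (intro suminf_cong)
      fix k
      have "(\<Sum>l\<le>k. a l * x ^ l * (d (k - l) * x ^ (k - l))) = (\<Sum>l\<le>k. a l * d (k - l) * x ^ k)"
      proof (intro sum.cong refl)
        fix l assume "l \<in> {..k}"
        then have "x ^ l * x ^ (k - l) = x ^ k" by (simp flip: power_add)
        then show "a l * x ^ l * (d (k - l) * x ^ (k - l)) = a l * d (k - l) * x ^ k"
          by (metis mult.assoc mult.left_commute)
      qed
      then show "(\<Sum>l\<le>k. a l * x ^ l * (d (k - l) * x ^ (k - l))) = diffs d k * x ^ k"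
        by (simp add: diffs_eq sum_distrib_right)
    qed
    finally have "(\<Sum>k. diffs d k * x ^ k) = h x * S x"
      using sums_unique[OF asums[OF that]] by (simp add: S_def)
    then show ?thesis using D by (simp add: mult.commute)
  qed
  define E where "E x = exp (\<Sum>j\<le>n. \<gamma> j * ln (1 - b j * x))" for x
  have pos: "0 < 1 - b j * x" if "j \<le> n" "\<bar>x\<bar> < R" for j x
    using babs[OF that] by auto
  have Ederiv: "DERIV E x :> - (E x * h x)" if "\<bar>x\<bar> < R" for x
  proof -
    have "DERIV E x :> E x * (\<Sum>j\<le>n. \<gamma> j * ((- b j) / (1 - b j * x)))"
      unfolding E_def using pos[OF _ that]
      by (auto intro!: derivative_eq_intros sum.cong simp: mult.commute)
    moreover have "E x * (\<Sum>j\<le>n. \<gamma> j * ((- b j) / (1 - b j * x))) = - (E x * h x)"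
      unfolding h_def by (simp add: sum_negf)
    ultimately show ?thesis by simp
  qed
  have Fderiv: "DERIV (\<lambda>x. S x * E x) x :> 0" if "\<bar>x\<bar> < R" for x
    using DERIV_mult[OF Sderiv[OF that] Ederiv[OF that]] by (simp add: mult_ac)
  have "S t * E t = S 0 * E 0"
    by (rule DERIV_isconst3[of "-R" R]) (use R1 t Fderiv in \<open>auto simp: abs_less_iff\<close>)
  also have "S 0 = 1" unfolding S_def using powser_zero[of d] by (simp add: d_def)
  also have "E 0 = 1" unfolding E_def by simp
  finally have "S t = exp (- (\<Sum>j\<le>n. \<gamma> j * ln (1 - b j * t)))"
    unfolding E_def by (simp add: exp_minus field_simps)
  moreover have "summable (\<lambda>k. d k * t ^ k)" using summ[of t] t R1 by auto
  ultimately show ?thesis unfolding S_def d_def b_def by (metis summable_sums)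
qed

lemma layer_cake:
  assumes M: "prob_space M" and Z[measurable]: "Z \<in> borel_measurable M" and nn: "\<And>\<omega>. \<omega> \<in> space M \<Longrightarrow> 0 \<le> Z \<omega>"
  shows "(\<integral>\<^sup>+\<omega>. ennreal (Z \<omega>) \<partial>M) = (\<integral>\<^sup>+x. indicator {0..} x * emeasure M {\<omega>\<in>space M. x < Z \<omega>} \<partial>lborel)"
proof -
  interpret P: prob_space M by (rule M)
  interpret pair_sigma_finite lborel M
    by (intro pair_sigma_finite.intro lborel.sigma_finite_measure_axioms P.sigma_finite_measure_axioms)
  have "(\<integral>\<^sup>+\<omega>. ennreal (Z \<omega>) \<partial>M) = (\<integral>\<^sup>+\<omega>. (\<integral>\<^sup>+x. indicator {0..} x * indicator {\<omega>\<in>space M. x < Z \<omega>} \<omega> \<partial>lborel) \<partial>M)"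
  proof (intro nn_integral_cong)
    fix \<omega> assume \<omega>: "\<omega> \<in> space M"
    have "(\<integral>\<^sup>+x. indicator {0..} x * indicator {\<omega>\<in>space M. x < Z \<omega>} \<omega> \<partial>lborel) = (\<integral>\<^sup>+x. indicator {0..<Z \<omega>} x \<partial>lborel)"
      using \<omega> by (intro nn_integral_cong) (auto split: split_indicator)
    also have "\<dots> = ennreal (Z \<omega>)" using nn[OF \<omega>] by simp
    finally show "ennreal (Z \<omega>) = (\<integral>\<^sup>+x. indicator {0..} x * indicator {\<omega>\<in>space M. x < Z \<omega>} \<omega> \<partial>lborel)" by simp
  qed
  also have "\<dots> = (\<integral>\<^sup>+x. (\<integral>\<^sup>+\<omega>. indicator {0..} x * indicator {\<omega>\<in>space M. x < Z \<omega>} \<omega> \<partial>M) \<partial>lborel)"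
    by (rule Fubini'[where f="\<lambda>x \<omega>. indicator {0..} x * indicator {\<omega>\<in>space M. x < Z \<omega>} \<omega>"]) measurable
  also have "\<dots> = (\<integral>\<^sup>+x. indicator {0..} x * emeasure M {\<omega>\<in>space M. x < Z \<omega>} \<partial>lborel)"
    by (intro nn_integral_cong) (simp add: nn_integral_cmult_indicator)
  finally show ?thesis .
qed
lemma filterlim_lin:
  assumes "0 < a" shows "filterlim (\<lambda>x::real. 1 + x / a) at_top at_top"
proof -
  have "filterlim (\<lambda>x::real. x * (1 / a)) at_top at_top"
    by (rule filterlim_at_top_mult_tendsto_pos[OF tendsto_const]) (use assms in \<open>auto intro: filterlim_ident\<close>)
  then have "filterlim (\<lambda>x::real. 1 + x * (1 / a)) at_top at_top"
    by (rule filterlim_tendsto_add_at_top[OF tendsto_const])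
  then show ?thesis by simp
qed

lemma tail_int:
  assumes a: "0 < a" and s: "1 < s" and v: "0 \<le> v"
  shows "(\<integral>\<^sup>+x. ennreal ((1 + x / a) powr (- s)) * indicator {v..} x \<partial>lborel)
       = ennreal (a / (s - 1) * (1 + v / a) powr (- (s - 1)))"
proof -
  define F where "F x = - (a / (s - 1)) * (1 + x / a) powr (1 - s)" for x
  have D: "DERIV F x :> (1 + x / a) powr (- s)" if "v \<le> x" for x
  proof -
    have pos: "0 < 1 + x / a" using a v that by (simp add: add_pos_nonneg)
    have g: "DERIV (\<lambda>x. 1 + x / a) x :> 1 / a" using a by (auto intro!: derivative_eq_intros)
    have "DERIV F x :> - (a / (s - 1)) * ((1 - s) * (1 + x / a) powr (1 - s - of_nat 1) * (1 / a))"
      unfolding F_def by (intro DERIV_cmult DERIV_fun_powr[OF g pos])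
    moreover have "- (a / (s - 1)) * ((1 - s) * (1 + x / a) powr (1 - s - of_nat 1) * (1 / a)) = (1 + x / a) powr (- s)"
      using a s by (simp add: field_simps)
    ultimately show ?thesis by simp
  qed
  have lim: "(F \<longlongrightarrow> 0) at_top"
  proof -
    have "((\<lambda>x. (1 + x / a) powr (1 - s)) \<longlongrightarrow> 0) at_top"
      by (rule tendsto_neg_powr) (use s filterlim_lin[OF a] in auto)
    then have "((\<lambda>x. - (a / (s - 1)) * (1 + x / a) powr (1 - s)) \<longlongrightarrow> - (a / (s - 1)) * 0) at_top"
      by (intro tendsto_mult tendsto_const)
    then show ?thesis unfolding F_def[abs_def] by simp
  qed
  have "(\<integral>\<^sup>+x. ennreal ((1 + x / a) powr (- s)) * indicator {v..} x \<partial>lborel) = 0 - F v"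
    by (rule nn_integral_FTC_atLeast[OF _ D _ lim]) auto
  then show ?thesis by (simp add: F_def)
qed

lemma tail_int_inf:
  assumes a: "0 < a" and s: "s \<le> 1" and v: "0 \<le> v"
  shows "(\<integral>\<^sup>+x. ennreal ((1 + x / a) powr (- s)) * indicator {v..} x \<partial>lborel) = \<infinity>"
proof (rule ccontr)
  let ?I = "\<integral>\<^sup>+x. ennreal ((1 + x / a) powr (- s)) * indicator {v..} x \<partial>lborel"
  assume "?I \<noteq> \<infinity>"
  then obtain c where c: "?I = ennreal c" "0 \<le> c" by (cases ?I) auto
  define F where "F x = a * ln (1 + x / a)" for x
  have "filterlim F at_top at_top"
    unfolding F_def
    by (rule filterlim_tendsto_pos_mult_at_top[OF tendsto_const a])
       (rule filterlim_compose[OF ln_at_top filterlim_lin[OF a]])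
  then have "eventually (\<lambda>x. c + F v + 1 \<le> F x) at_top" by (simp add: filterlim_at_top)
  then obtain N where N: "\<And>x. N \<le> x \<Longrightarrow> c + F v + 1 \<le> F x" by (auto simp: eventually_at_top_linorder)
  define b where "b = max N v"
  have "ennreal (F b - F v) = (\<integral>\<^sup>+x. ennreal (1 / (1 + x / a)) * indicator {v..b} x \<partial>lborel)"
  proof (rule nn_integral_FTC_Icc[symmetric])
    fix x assume x: "x \<in> {v..b}"
    have pos: "0 < 1 + x / a" using a v x by (simp add: add_pos_nonneg)
    show "DERIV F x :> 1 / (1 + x / a)" unfolding F_def using pos a
      by (auto intro!: derivative_eq_intros simp: field_simps)
    show "0 \<le> 1 / (1 + x / a)" using pos by simp
  qed (auto simp: b_def)
  also have "\<dots> \<le> ?I"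
  proof (intro nn_integral_mono)
    fix x
    show "ennreal (1 / (1 + x / a)) * indicator {v..b} x \<le> ennreal ((1 + x / a) powr (- s)) * indicator {v..} x"
    proof (cases "v \<le> x \<and> x \<le> b")
      case True
      then have ge: "1 \<le> 1 + x / a" using a v by simp
      have "1 / (1 + x / a) = (1 + x / a) powr (- 1)" using ge by (simp add: powr_minus_divide)
      also have "\<dots> \<le> (1 + x / a) powr (- s)" using ge s by (intro powr_mono) auto
      finally show ?thesis using True by (auto intro: ennreal_leI)
    qed (auto split: split_indicator)
  qed
  finally have "ennreal (F b - F v) \<le> ennreal c" using c by simp
  then have "F b - F v \<le> c \<or> F b \<le> F v \<and> c = 0" using c by (simp add: ennreal_le_iff2)
  then have "F b - F v \<le> c" by (elim disjE) linarith+
  moreover have "c + F v + 1 \<le> F b" using N[of b] by (simp add: b_def)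
  ultimately show False by linarith
qed


lemma main_abstract:
  fixes M :: "'a measure" and Y :: "'a \<Rightarrow> real" and Fb :: "real \<Rightarrow> real" and p :: "nat \<Rightarrow> real"
  assumes M: "prob_space M" and Y[measurable]: "Y \<in> borel_measurable M"
    and surv: "\<And>x. 0 \<le> x \<Longrightarrow> measure M {\<omega>\<in>space M. x < Y \<omega>} = Fb x"
    and Fb_meas[measurable]: "Fb \<in> borel_measurable borel"
    and Fb0: "Fb 0 = 1"
    and Fb_sums: "\<And>x. 0 \<le> x \<Longrightarrow> (\<lambda>k. p k * (1 + x / a) powr (- (g + real k))) sums Fb x"
    and p_nn: "\<And>k. 0 \<le> p k" and p0: "0 < p 0" and a: "0 < a"
    and v: "0 \<le> v" "Fb v = 1 - q" and q: "q < 1"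
    and VaR: "VaR M Y q = v"
    and integ: "set_integrable M {\<omega> \<in> space M. VaR M Y q < Y \<omega>} Y"
  shows "CTE M Y q = integral\<^sup>L M Y * (\<Sum>k. (1 / integral\<^sup>L M Y) * (a / (g + real k - 1)) * p k
            * (1 + v / a) powr (- (g + real k - 1))) / (1 - q) + v"
proof -
  interpret P: prob_space M by (rule M)
  define A where "A = {\<omega> \<in> space M. v < Y \<omega>}"
  have A_sets[measurable]: "A \<in> sets M" unfolding A_def by measurable
  define Z where "Z \<omega> = indicator A \<omega> *\<^sub>R Y \<omega>" for \<omega>
  have Z_meas[measurable]: "Z \<in> borel_measurable M" unfolding Z_def by measurable
  have Znn: "0 \<le> Z \<omega>" if "\<omega> \<in> space M" for \<omega>
    using v(1) by (auto simp: Z_def A_def split: split_indicator)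
  have Zint: "integrable M Z" using integ unfolding set_integrable_def Z_def VaR A_def by simp
  have lc: "(\<integral>\<^sup>+\<omega>. ennreal (Z \<omega>) \<partial>M) = (\<integral>\<^sup>+x. indicator {0..} x * emeasure M {\<omega>\<in>space M. x < Z \<omega>} \<partial>lborel)"
    by (rule layer_cake[OF M Z_meas Znn])
  also have "\<dots> = (\<integral>\<^sup>+x. ennreal (1 - q) * indicator {0..<v} x + ennreal (Fb x) * indicator {v..} x \<partial>lborel)"
  proof (intro nn_integral_cong)
    fix x :: real
    show "indicator {0..} x * emeasure M {\<omega>\<in>space M. x < Z \<omega>} = ennreal (1 - q) * indicator {0..<v} x + ennreal (Fb x) * indicator {v..} x"
    proof (cases "0 \<le> x")
      case True
      have "{\<omega>\<in>space M. x < Z \<omega>} = {\<omega>\<in>space M. max x v < Y \<omega>}"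
        using True by (auto simp: Z_def A_def split: split_indicator)
      then have "emeasure M {\<omega>\<in>space M. x < Z \<omega>} = ennreal (Fb (max x v))"
        using surv[of "max x v"] True by (simp add: P.emeasure_eq_measure)
      then show ?thesis using True v by (auto simp: max_def split: split_indicator)
    next
      case False then show ?thesis using v by (auto split: split_indicator)
    qed
  qed
  also have "\<dots> = (\<integral>\<^sup>+x. ennreal (1 - q) * indicator {0..<v} x \<partial>lborel) + (\<integral>\<^sup>+x. ennreal (Fb x) * indicator {v..} x \<partial>lborel)"
    by (rule nn_integral_add) auto
  also have "(\<integral>\<^sup>+x. ennreal (1 - q) * indicator {0..<v} x \<partial>lborel) = ennreal ((1 - q) * v)"
    using v q by (simp add: nn_integral_cmult_indicator ennreal_mult)
  finally have lc2: "(\<integral>\<^sup>+\<omega>. ennreal (Z \<omega>) \<partial>M) = ennreal ((1 - q) * v) + (\<integral>\<^sup>+x. ennreal (Fb x) * indicator {v..} x \<partial>lborel)" .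
  define h where "h k x = ennreal (p k * (1 + x / a) powr (- (g + real k))) * indicator {v..} x" for k x
  have "(\<integral>\<^sup>+x. ennreal (Fb x) * indicator {v..} x \<partial>lborel) = (\<integral>\<^sup>+x. (\<Sum>k. h k x) \<partial>lborel)"
  proof (intro nn_integral_cong)
    fix x :: real
    show "ennreal (Fb x) * indicator {v..} x = (\<Sum>k. h k x)"
    proof (cases "v \<le> x")
      case True
      have "(\<Sum>k. ennreal (p k * (1 + x / a) powr (- (g + real k)))) = ennreal (Fb x)"
        using True v by (intro suminf_ennreal_eq Fb_sums) (auto intro!: mult_nonneg_nonneg p_nn)
      then show ?thesis using True by (simp add: h_def)
    qed (simp add: h_def)
  qed
  also have "\<dots> = (\<Sum>k. integral\<^sup>N lborel (h k))"
    by (rule nn_integral_suminf) (simp add: h_def)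
  finally have T1: "(\<integral>\<^sup>+x. ennreal (Fb x) * indicator {v..} x \<partial>lborel) = (\<Sum>k. integral\<^sup>N lborel (h k))" .
  have hk: "integral\<^sup>N lborel (h k) = ennreal (p k) * (\<integral>\<^sup>+x. ennreal ((1 + x / a) powr (- (g + real k))) * indicator {v..} x \<partial>lborel)" for k
    unfolding h_def
    by (subst nn_integral_cmult[symmetric]) (auto simp: ennreal_mult p_nn mult_ac intro!: nn_integral_cong)
  have fin: "(\<integral>\<^sup>+\<omega>. ennreal (Z \<omega>) \<partial>M) \<noteq> \<infinity>" using integrableD(2)[OF Zint] .
  have g1: "1 < g"
  proof (rule ccontr)
    assume "\<not> 1 < g"
    then have "integral\<^sup>N lborel (h 0) = \<infinity>"
      unfolding hk using tail_int_inf[OF a _ v(1), of g] p0 by (simp add: ennreal_mult_top)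
    moreover have "integral\<^sup>N lborel (h 0) \<le> (\<Sum>k. integral\<^sup>N lborel (h k))"
      using sum_le_suminf[OF summableI, of "{0}"] by simp
    ultimately show False using fin lc2 T1 by (simp add: top_unique)
  qed
  define T where "T k = p k * (a / (g + real k - 1) * (1 + v / a) powr (- (g + real k - 1)))" for k
  have T_nn: "0 \<le> T k" for k unfolding T_def using p_nn a g1 by (intro mult_nonneg_nonneg) auto
  have hT: "integral\<^sup>N lborel (h k) = ennreal (T k)" for k
  proof -
    have "1 < g + real k" using g1 by simp
    have nn: "0 \<le> a / (g + real k - 1) * (1 + v / a) powr (- (g + real k - 1))"
      using a g1 by auto
    show ?thesis
      unfolding hk tail_int[OF a \<open>1 < g + real k\<close> v(1)] T_def
      using ennreal_mult[OF p_nn[of k] nn] by simp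
  qed
  have sumT_fin: "(\<Sum>k. ennreal (T k)) \<noteq> \<infinity>"
    using fin lc2 T1 hT by (simp add: top_unique)
  have Tsum: "summable T" by (rule summable_suminf_not_top[OF T_nn]) (use sumT_fin in simp)
  have "(\<integral>\<^sup>+\<omega>. ennreal (Z \<omega>) \<partial>M) = ennreal ((1 - q) * v + suminf T)"
    unfolding lc2 T1 hT using suminf_ennreal2[OF T_nn Tsum] v q
    by (simp add: ennreal_plus suminf_nonneg[OF Tsum T_nn])
  then have LINT: "(LINT \<omega>:A|M. Y \<omega>) = (1 - q) * v + suminf T"
    unfolding set_lebesgue_integral_def
    using integral_eq_nn_integral[of Z M] Znn v q suminf_nonneg[OF Tsum T_nn]
    by (simp add: Z_def[abs_def] AE_I2 del: ennreal_plus)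
  have measA: "measure M A = 1 - q" using surv[OF v(1)] v unfolding A_def by simp
  have CTE: "CTE M Y q = ((1 - q) * v + suminf T) / (1 - q)"
    unfolding CTE_def VaR A_def[symmetric] LINT measA ..
  have AEpos: "AE \<omega> in M. 0 < Y \<omega>"
  proof -
    have "measure M {\<omega>\<in>space M. 0 < Y \<omega>} = 1" using surv[of 0] Fb0 by simp
    from P.AE_prob_1[OF this] show ?thesis by auto
  qed
  have Yint: "integrable M Y"
  proof (rule Bochner_Integration.integrable_bound[where f="\<lambda>\<omega>. Z \<omega> + v"])
    show "integrable M (\<lambda>\<omega>. Z \<omega> + v)" using Zint by auto
    show "AE \<omega> in M. norm (Y \<omega>) \<le> norm (Z \<omega> + v)"
      using AEpos AE_space by eventually_elim (use v(1) in \<open>auto simp: Z_def A_def split: split_indicator\<close>)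
  qed simp
  have E0: "integral\<^sup>L M Y \<noteq> 0"
  proof
    assume "integral\<^sup>L M Y = 0"
    then have "AE \<omega> in M. Y \<omega> = 0"
    proof -
      have "AE \<omega> in M. 0 \<le> Y \<omega>" using AEpos by eventually_elim auto
      then show ?thesis using integral_nonneg_eq_0_iff_AE[OF Yint] \<open>integral\<^sup>L M Y = 0\<close> by simp
    qed
    with AEpos have "AE \<omega> in M. False" by eventually_elim auto
    then show False by simp
  qed
  have "(\<Sum>k. (1 / integral\<^sup>L M Y) * (a / (g + real k - 1)) * p k * (1 + v / a) powr (- (g + real k - 1)))
      = (\<Sum>k. (1 / integral\<^sup>L M Y) * T k)"
    unfolding T_def by (simp add: mult_ac)
  also have "\<dots> = (1 / integral\<^sup>L M Y) * suminf T" by (rule suminf_mult[OF Tsum])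
  finally show ?thesis unfolding CTE using E0 q by (simp add: field_simps)
qed




theorem proposition4p2:
  fixes M :: "'a measure" and n :: nat
    and c :: "nat \<Rightarrow> nat \<Rightarrow> real" and \<sigma> \<gamma> :: "nat \<Rightarrow> real"
    and X :: "nat \<Rightarrow> 'a \<Rightarrow> real" and q :: real
  assumes M: "prob_space M"
    and c01: "\<forall>i<n. \<forall>j\<le>n. c i j \<in> {0, 1}"
    and rows: "\<forall>i<n. \<exists>j\<le>n. c i j = 1"
    and cols: "\<forall>j\<le>n. \<exists>i<n. c i j = 1"
    and \<sigma>_pos: "\<forall>i<n. 0 < \<sigma> i"
    and \<gamma>_pos: "\<forall>j\<le>n. 0 < \<gamma> j"
    and X_rv: "\<forall>i<n. X i \<in> borel_measurable M"
    and X_surv: "\<forall>x::nat \<Rightarrow> real. (\<forall>i<n. 0 < x i) \<longrightarrow>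
         measure M {\<omega> \<in> space M. \<forall>i<n. x i < X i \<omega>}
           = (\<Prod>j\<le>n. (1 + (\<Sum>i<n. c i j * x i / \<sigma> i)) powr (- \<gamma> j))"
    and q: "0 \<le> q" "q < 1"
    and CTE_finite: "set_integrable M
         {\<omega> \<in> space M. VaR M (\<lambda>\<omega>. Min ((\<lambda>i. X i \<omega>) ` {..<n})) q
                          < Min ((\<lambda>i. X i \<omega>) ` {..<n})}
         (\<lambda>\<omega>. Min ((\<lambda>i. X i \<omega>) ` {..<n}))"
  shows "let Xmin = (\<lambda>\<omega>. Min ((\<lambda>i. X i \<omega>) ` {..<n}));
             EXmin = integral\<^sup>L M Xmin;
             a = alpha_plus n c \<sigma>;
             gs = (\<Sum>j\<le>n. \<gamma> j);
             qk = (\<lambda>k. (1 / EXmin) * (a / (gs + real k - 1)) * p_seq n c \<sigma> \<gamma> k);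
             Fstar = (\<lambda>x. \<Sum>k. qk k * (1 + x / a) powr (- (gs + real k - 1)));
             v = VaR M Xmin q
         in CTE M Xmin q = EXmin * Fstar v / (1 - q) + v"
proof -
  interpret P: prob_space M by (rule M)
  define Y where "Y = (\<lambda>\<omega>. Min ((\<lambda>i. X i \<omega>) ` {..<n}))"
  have Y_meas[measurable]: "Y \<in> borel_measurable M"
    unfolding Y_def using X_rv by (intro borel_measurable_Min) auto
  have n0: "0 < n" using cols by auto
  define s where "s j = (\<Sum>i<n. c i j / \<sigma> i)" for j
  have s_pos: "0 < s j" if jn: "j \<le> n" for j
  proof -
    obtain i where i: "i < n" "c i j = 1" using cols jn by auto
    have "0 \<le> c i' j / \<sigma> i'" if "i' < n" for i'
    proof -
      have "c i' j = 0 \<or> c i' j = 1" using c01 that jn by auto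
      then show ?thesis using \<sigma>_pos that by auto
    qed
    then show ?thesis unfolding s_def using i \<sigma>_pos
      by (intro sum_pos2[of _ i]) auto
  qed
  define \<alpha> where "\<alpha> j = alpha_col n c \<sigma> j" for j
  have \<alpha>_eq: "\<alpha> j = inverse (s j)" for j unfolding \<alpha>_def alpha_col_def s_def ..
  have \<alpha>_pos: "0 < \<alpha> j" if "j \<le> n" for j using s_pos[OF that] \<alpha>_eq by simp
  define a where "a = alpha_plus n c \<sigma>"
  have a_eq: "a = Max (\<alpha> ` {..n})" unfolding a_def alpha_plus_def \<alpha>_def ..
  have \<alpha>_le: "\<alpha> j \<le> a" if "j \<le> n" for j unfolding a_eq using that by (intro Max_ge) auto
  have a_pos: "0 < a" using \<alpha>_le[of 0] \<alpha>_pos[of 0] by simp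
  define r where "r j = \<alpha> j / a" for j
  have r: "0 < r j \<and> r j \<le> 1" if "j \<le> n" for j
    using \<alpha>_pos[OF that] \<alpha>_le[OF that] a_pos by (simp add: r_def)
  define g where "g = (\<Sum>j\<le>n. \<gamma> j)"
  define G where "G x = (\<Sum>j\<le>n. \<gamma> j * ln (1 + x * s j))" for x
  define Fb where "Fb x = exp (- G x)" for x
  have pos1: "0 < 1 + x * s j" if "0 \<le> x" "j \<le> n" for x j
    using s_pos[OF that(2)] that(1) by (simp add: add_pos_nonneg)
  have pos1': "1 + x * s j \<noteq> 0" if "0 \<le> x" "j \<le> n" for x j
    using pos1[OF that] by simp
  have G0: "G 0 = 0" by (simp add: G_def)
  have Fb0: "Fb 0 = 1" by (simp add: Fb_def G0)
  have Gmono: "G x < G y" if "0 \<le> x" "x < y" for x y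
    unfolding G_def
  proof (rule sum_strict_mono)
    fix j assume j: "j \<in> {..n}"
    have "1 + x * s j < 1 + y * s j" using s_pos[of j] j that by simp
    then have "ln (1 + x * s j) < ln (1 + y * s j)" using pos1[of x j] j that by simp
    then show "\<gamma> j * ln (1 + x * s j) < \<gamma> j * ln (1 + y * s j)"
      using \<gamma>_pos j by (intro mult_strict_left_mono) auto
  qed auto
  have Gle_iff: "G x \<le> G y \<longleftrightarrow> x \<le> y" if "0 \<le> x" "0 \<le> y" for x y
    using Gmono[of x y] Gmono[of y x] that by (cases x y rule: linorder_cases) auto
  have Gcont: "continuous_on {0..} G"
    unfolding G_def by (auto intro!: continuous_intros simp: pos1')
  have Gisc: "isCont G 0"
    unfolding G_def using pos1[of 0] by (auto intro!: continuous_intros)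
  have Fb_meas: "Fb \<in> borel_measurable borel" unfolding Fb_def G_def by measurable
  have Fb_prod: "(\<Prod>j\<le>n. (1 + x * s j) powr (- \<gamma> j)) = Fb x" if "0 \<le> x" for x
  proof -
    have "(\<Prod>j\<le>n. (1 + x * s j) powr (- \<gamma> j)) = (\<Prod>j\<le>n. exp (- (\<gamma> j * ln (1 + x * s j))))"
      by (intro prod.cong refl) (auto simp: powr_def pos1'[OF that])
    also have "\<dots> = Fb x" unfolding Fb_def G_def by (simp add: exp_sum sum_negf[symmetric])
    finally show ?thesis .
  qed
  have surv_pos: "measure M {\<omega>\<in>space M. x < Y \<omega>} = Fb x" if x: "0 < x" for x
  proof -
    have "{\<omega>\<in>space M. x < Y \<omega>} = {\<omega>\<in>space M. \<forall>i<n. (\<lambda>_. x) i < X i \<omega>}"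
    proof -
      have "x < Y \<omega> \<longleftrightarrow> (\<forall>i<n. x < X i \<omega>)" for \<omega>
        unfolding Y_def using n0 by (subst Min_gr_iff) auto
      then show ?thesis by simp
    qed
    then have "measure M {\<omega>\<in>space M. x < Y \<omega>} = (\<Prod>j\<le>n. (1 + (\<Sum>i<n. c i j * x / \<sigma> i)) powr (- \<gamma> j))"
      using X_surv x by simp
    also have "\<dots> = (\<Prod>j\<le>n. (1 + x * s j) powr (- \<gamma> j))"
      unfolding s_def by (simp add: sum_distrib_left mult.commute)
    also have "\<dots> = Fb x" using Fb_prod x by simp
    finally show ?thesis .
  qed
  have surv: "measure M {\<omega>\<in>space M. x < Y \<omega>} = Fb x" if x: "0 \<le> x" for x
  proof (cases "x = 0")
    case False then show ?thesis using surv_pos x by simp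
  next
    case True
    have lim: "(Fb \<longlongrightarrow> Fb 0) (at_right 0)"
      unfolding Fb_def using Gisc by (intro tendsto_intros) (simp add: isCont_def filterlim_at_split)
    have "Fb 0 \<le> measure M {\<omega>\<in>space M. 0 < Y \<omega>}"
    proof (rule tendsto_le[OF _ tendsto_const lim])
      show "\<forall>\<^sub>F e in at_right 0. Fb e \<le> measure M {\<omega>\<in>space M. 0 < Y \<omega>}"
        unfolding eventually_at_right_field
      proof (intro exI[of _ 1] conjI allI impI)
        fix e :: real assume e: "0 < e" "e < 1"
        have "Fb e = measure M {\<omega>\<in>space M. e < Y \<omega>}" using surv_pos[of e] e by simp
        also have "\<dots> \<le> measure M {\<omega>\<in>space M. 0 < Y \<omega>}"
          using e by (intro P.finite_measure_mono) auto
        finally show "Fb e \<le> measure M {\<omega>\<in>space M. 0 < Y \<omega>}" .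
      qed simp
    qed simp
    moreover have "measure M {\<omega>\<in>space M. 0 < Y \<omega>} \<le> 1" by (rule P.prob_le_1)
    ultimately show ?thesis using True Fb0 by simp
  qed
  define L where "L = - ln (1 - q)"
  have L0: "0 \<le> L" using q by (simp add: L_def)
  define X0 where "X0 = exp (L / \<gamma> 0) / s 0"
  have X0: "0 \<le> X0" using s_pos[of 0] by (simp add: X0_def)
  have "L \<le> G X0"
  proof -
    have "1 + X0 * s 0 = 1 + exp (L / \<gamma> 0)" using s_pos[of 0] by (simp add: X0_def)
    then have "L / \<gamma> 0 \<le> ln (1 + X0 * s 0)"
      by (simp add: ln_ge_iff add_pos_pos)
    then have "L \<le> \<gamma> 0 * ln (1 + X0 * s 0)" using \<gamma>_pos by (simp add: divide_le_eq mult.commute)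
    also have "\<dots> \<le> G X0" unfolding G_def
    proof (rule member_le_sum[where f="\<lambda>j. \<gamma> j * ln (1 + X0 * s j)"])
      fix j assume "j \<in> {..n} - {0}"
      then have "1 \<le> 1 + X0 * s j" using s_pos[of j] X0 by simp
      moreover have "0 < \<gamma> j" using \<gamma>_pos \<open>j \<in> {..n} - {0}\<close> by simp
      ultimately show "0 \<le> \<gamma> j * ln (1 + X0 * s j)" by (intro mult_nonneg_nonneg) auto
    qed auto
    finally show ?thesis .
  qed
  then obtain x0 where x0: "0 \<le> x0" "x0 \<le> X0" "G x0 = L"
    using IVT'[of G 0 L X0] G0 L0 X0 continuous_on_subset[OF Gcont] by auto
  have Fbx0: "Fb x0 = 1 - q" using x0 q by (simp add: Fb_def L_def)
  have setEq: "{x. 0 \<le> x \<and> q \<le> measure M {\<omega> \<in> space M. Y \<omega> \<le> x}} = {x0..}"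
  proof -
    have "0 \<le> x \<and> q \<le> measure M {\<omega> \<in> space M. Y \<omega> \<le> x} \<longleftrightarrow> x0 \<le> x" for x
    proof (cases "0 \<le> x")
      case True
      have "{\<omega> \<in> space M. Y \<omega> \<le> x} = space M - {\<omega> \<in> space M. x < Y \<omega>}" by auto
      then have "measure M {\<omega> \<in> space M. Y \<omega> \<le> x} = 1 - Fb x"
        using P.prob_compl[of "{\<omega> \<in> space M. x < Y \<omega>}"] surv[OF True] by simp
      moreover have "q \<le> 1 - Fb x \<longleftrightarrow> G x0 \<le> G x"
      proof -
        have "- G x \<le> ln (1 - q) \<longleftrightarrow> exp (- G x) \<le> 1 - q" using q by (intro ln_ge_iff) auto
        then show ?thesis using x0 by (auto simp: Fb_def L_def)
      qed
      ultimately show ?thesis using Gle_iff[OF x0(1) True] True by simp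
    next
      case False then show ?thesis using x0 by auto
    qed
    then show ?thesis by auto
  qed
  have VaR: "VaR M Y q = x0" unfolding VaR_def setEq by simp
  define p where "p = p_seq n c \<sigma> \<gamma>"
  have r_eq: "(\<lambda>j. alpha_col n c \<sigma> j / alpha_plus n c \<sigma>) = r"
    by (simp add: r_def \<alpha>_def a_def fun_eq_iff)
  define d where "d = delta_seq n r \<gamma>"
  have d_nn: "0 \<le> d k" for k unfolding d_def using r \<gamma>_pos by (intro delta_nonneg) auto
  define cp where "cp = c_plus n c \<sigma> \<gamma>"
  have cp_eq: "cp = exp (\<Sum>j\<le>n. \<gamma> j * ln (r j))"
  proof -
    have "cp = (\<Prod>j\<le>n. r j powr \<gamma> j)" unfolding cp_def c_plus_def
      by (simp add: r_def \<alpha>_def a_def)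
    also have "\<dots> = (\<Prod>j\<le>n. exp (\<gamma> j * ln (r j)))"
    proof (intro prod.cong refl)
      fix j assume "j \<in> {..n}"
      then have "0 < r j" using r by auto
      then show "r j powr \<gamma> j = exp (\<gamma> j * ln (r j))" by (simp add: powr_def mult.commute)
    qed
    finally show ?thesis by (simp add: exp_sum)
  qed
  have cp_pos: "0 < cp" using cp_eq by simp
  have p_eq: "p k = cp * d k" for k unfolding p_def p_seq_def cp_def d_def r_eq ..
  have p_nn: "0 \<le> p k" for k using p_eq cp_pos d_nn by simp
  have p0: "0 < p 0" using p_eq cp_pos by (simp add: d_def)
  have Fb_sums: "(\<lambda>k. p k * (1 + x / a) powr (- (g + real k))) sums Fb x" if x: "0 \<le> x" for x
  proof -
    define W where "W = 1 + x / a"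
    have W1: "1 \<le> W" using x a_pos by (simp add: W_def)
    define t where "t = 1 / W"
    have t: "0 \<le> t" "t \<le> 1" "0 < t" using W1 by (auto simp: t_def)
    have DS: "(\<lambda>k. d k * t ^ k) sums exp (- (\<Sum>j\<le>n. \<gamma> j * ln (1 - (1 - r j) * t)))"
      unfolding d_def using r \<gamma>_pos t by (intro delta_series) auto
    define C where "C = cp * W powr (- g)"
    have eq1: "C * (d k * t ^ k) = p k * W powr (- (g + real k))" for k
    proof -
      have "W powr (- (g + real k)) = W powr (- g) * W powr (- real k)"
        by (simp add: powr_add[symmetric])
      also have "W powr (- real k) = t ^ k"
        using W1 by (simp add: powr_minus powr_realpow t_def power_one_over inverse_eq_divide)
      finally show ?thesis by (simp add: C_def p_eq mult_ac)
    qed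
    have per_j: "ln (1 + x * s j) = ln W + ln (1 - (1 - r j) * t) - ln (r j)" if j: "j \<le> n" for j
    proof -
      have rj: "0 < r j" using r[OF j] by simp
      have sj: "s j = 1 / (a * r j)" using \<alpha>_eq[of j] a_pos rj unfolding r_def by (simp add: field_simps)
      have A: "1 - (1 - r j) * t = (x / a + r j) / W" using W1 by (simp add: t_def W_def field_simps)
      have Apos: "0 < 1 - (1 - r j) * t" unfolding A using W1 rj x a_pos by (intro divide_pos_pos add_nonneg_pos) auto
      have "1 + x * s j = W * (1 - (1 - r j) * t) / r j"
        unfolding A sj using W1 rj a_pos by (simp add: field_simps)
      then have "ln (1 + x * s j) = ln (W * (1 - (1 - r j) * t) / r j)" by simp
      also have "\<dots> = ln W + ln (1 - (1 - r j) * t) - ln (r j)"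
        using W1 Apos rj by (simp add: ln_div ln_mult)
      finally show ?thesis .
    qed
    have "G x = g * ln W + (\<Sum>j\<le>n. \<gamma> j * ln (1 - (1 - r j) * t)) - (\<Sum>j\<le>n. \<gamma> j * ln (r j))"
    proof -
      have "G x = (\<Sum>j\<le>n. \<gamma> j * ln W + \<gamma> j * ln (1 - (1 - r j) * t) - \<gamma> j * ln (r j))"
        unfolding G_def by (intro sum.cong refl) (simp add: per_j algebra_simps)
      then show ?thesis unfolding g_def by (simp add: sum.distrib sum_subtractf sum_distrib_right)
    qed
    then have eq2: "C * exp (- (\<Sum>j\<le>n. \<gamma> j * ln (1 - (1 - r j) * t))) = Fb x"
      unfolding C_def cp_eq Fb_def using W1 by (simp add: powr_def exp_add[symmetric] exp_diff)
    from sums_mult[OF DS, of C] show ?thesis unfolding eq1 eq2 W_def .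
  qed
  have integ: "set_integrable M {\<omega> \<in> space M. VaR M Y q < Y \<omega>} Y"
    using CTE_finite unfolding Y_def .
  have main: "CTE M Y q = integral\<^sup>L M Y * (\<Sum>k. (1 / integral\<^sup>L M Y) * (a / (g + real k - 1)) * p k
            * (1 + x0 / a) powr (- (g + real k - 1))) / (1 - q) + x0"
    by (rule main_abstract[OF M Y_meas surv Fb_meas Fb0 Fb_sums p_nn p0 a_pos x0(1) Fbx0 q(2) VaR integ])
  show ?thesis
    unfolding Let_def Y_def[symmetric] a_def[symmetric] g_def[symmetric] p_def[symmetric] VaR
    by (rule main)
qed


end
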